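(* For every odd $n\geq 5$, there exists a smooth nondegenerate line fibration of $\mathbb R^n$ such that the hyperplane distribution orthogonal to the fibers is not a contact structure.
   Context: A smooth line fibration of $\mathbb R^n$ is given by a smooth unit vector field $V$ on $\mathbb R^n$ all of whose integral curves are straight lines (equivalently $\nabla_V V\equiv 0$); the fibers are these oriented lines. It is nondegenerate if at every point the covariant derivative $\nabla V$ vanishes only in the direction of $V$, i.e. $\nabla_X V=0$ implies $X$ is a multiple of $V$. The orthogonal hyperplane distribution is $V^\perp$, the kernel of the $1$-form dual to $V$; it is a contact structure if this $1$-form $\alpha$ satisfies $\alpha\wedge(d\alpha)^{(n-1)/2}\neq 0$ everywhere. *)

theory Defs
  imports "HOL-Analysis.Analysis"
begin

fun Ck :: "nat \<Rightarrow> ('a::euclidean_space \<Rightarrow> 'b::real_normed_vector) \<Rightarrow> bool" where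
  "Ck 0 f = continuous_on UNIV f"
| "Ck (Suc k) f = (f differentiable_on UNIV \<and>
      (\<forall>v. Ck k (\<lambda>x. frechet_derivative f (at x) v)))"

definition smooth_map :: "('a::euclidean_space \<Rightarrow> 'b::real_normed_vector) \<Rightarrow> bool" where
  "smooth_map f \<longleftrightarrow> (\<forall>k. Ck k f)"

text \<open>Covariant derivative (flat connection) of a vector field V in direction X at p.\<close>
definition cov_deriv :: "(real^'n \<Rightarrow> real^'n) \<Rightarrow> real^'n \<Rightarrow> real^'n \<Rightarrow> real^'n" where
  "cov_deriv V p X = frechet_derivative V (at p) X"

definition line_fibration :: "(real^'n \<Rightarrow> real^'n) \<Rightarrow> bool" where
  "line_fibration V \<longleftrightarrow> smooth_map V \<and> (\<forall>p. norm (V p) = 1) \<and>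
     (\<forall>p. cov_deriv V p (V p) = 0)"

definition nondegenerate_fibration :: "(real^'n \<Rightarrow> real^'n) \<Rightarrow> bool" where
  "nondegenerate_fibration V \<longleftrightarrow>
     (\<forall>p X. cov_deriv V p X = 0 \<longrightarrow> (\<exists>c. X = c *\<^sub>R V p))"

text \<open>The dual 1-form alpha = <V,.> at p, and its exterior derivative
  d alpha_p(X,Y) = X(alpha(Y)) - Y(alpha(X)) (for constant fields X, Y).\<close>
definition dual_form :: "(real^'n \<Rightarrow> real^'n) \<Rightarrow> real^'n \<Rightarrow> real^'n \<Rightarrow> real" where
  "dual_form V p X = V p \<bullet> X"

definition d_dual_form :: "(real^'n \<Rightarrow> real^'n) \<Rightarrow> real^'n \<Rightarrow> real^'n \<Rightarrow> real^'n \<Rightarrow> real" where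
  "d_dual_form V p X Y = cov_deriv V p X \<bullet> Y - cov_deriv V p Y \<bullet> X"

text \<open>(a \<and> w^k)(v_0,...,v_2k) for a 1-form a and 2-form w on a vector space,
  by the alternation formula (normalization 1/2^k, wedge of alternating forms).\<close>
definition wedge_alpha_omega_pow ::
  "nat \<Rightarrow> ('v \<Rightarrow> real) \<Rightarrow> ('v \<Rightarrow> 'v \<Rightarrow> real) \<Rightarrow> (nat \<Rightarrow> 'v) \<Rightarrow> real" where
  "wedge_alpha_omega_pow k a w v =
     (1 / 2 ^ k) * (\<Sum>\<sigma> | \<sigma> permutes {0..<2*k+1}.
        of_int (sign \<sigma>) * a (v (\<sigma> 0)) *
        (\<Prod>j<k. w (v (\<sigma> (2*j+1))) (v (\<sigma> (2*j+2)))))"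

text \<open>V^perp = ker alpha is a contact structure: alpha \<and> (d alpha)^((n-1)/2) nowhere zero.\<close>
definition orth_contact :: "(real^'n \<Rightarrow> real^'n) \<Rightarrow> bool" where
  "orth_contact V \<longleftrightarrow> (\<forall>p. \<exists>v. wedge_alpha_omega_pow ((CARD('n) - 1) div 2)
       (dual_form V p) (d_dual_form V p) v \<noteq> 0)"

end

theory Submission
  imports Defs
begin

inductive sm :: "('a::euclidean_space \<Rightarrow> real) \<Rightarrow> bool" where
  sm_const: "sm (\<lambda>x. k)"
| sm_lin: "linear f \<Longrightarrow> sm f"
| sm_add: "sm f \<Longrightarrow> sm g \<Longrightarrow> sm (\<lambda>x. f x + g x)"
| sm_mult: "sm f \<Longrightarrow> sm g \<Longrightarrow> sm (\<lambda>x. f x * g x)"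
| sm_inv: "sm f \<Longrightarrow> (\<forall>x. 0 < f x) \<Longrightarrow> sm (\<lambda>x. inverse (f x))"
| sm_isq: "sm f \<Longrightarrow> (\<forall>x. 0 < f x) \<Longrightarrow> sm (\<lambda>x. inverse (sqrt (f x)))"

lemma sm_cong: "sm f \<Longrightarrow> (\<And>x. f x = g x) \<Longrightarrow> sm g"
proof -
  assume "sm f" "\<And>x. f x = g x"
  then have "f = g" by auto
  with \<open>sm f\<close> show ?thesis by simp
qed

lemma sm_deriv:
  assumes "sm f"
  shows "\<exists>f'. (\<forall>x. (f has_derivative f' x) (at x)) \<and> (\<forall>v. sm (\<lambda>x. f' x v))"
  using assms
proof induction
  case (sm_const k)
  show ?case by (rule exI[of _ "\<lambda>x h. 0"]) (auto intro: sm.sm_const)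
next
  case (sm_lin f)
  show ?case
    by (rule exI[of _ "\<lambda>x. f"]) (auto intro: sm.sm_const bounded_linear_imp_has_derivative
        simp: linear_conv_bounded_linear[symmetric] sm_lin)
next
  case (sm_add f g)
  then obtain f' g' where f: "\<forall>x. (f has_derivative f' x) (at x)" "\<forall>v. sm (\<lambda>x. f' x v)"
    and g: "\<forall>x. (g has_derivative g' x) (at x)" "\<forall>v. sm (\<lambda>x. g' x v)" by blast
  show ?case
    by (rule exI[of _ "\<lambda>x h. f' x h + g' x h"]) (use f g in \<open>auto intro!: has_derivative_add sm.sm_add\<close>)
next
  case (sm_mult f g)
  then obtain f' g' where f: "\<forall>x. (f has_derivative f' x) (at x)" "\<forall>v. sm (\<lambda>x. f' x v)"
    and g: "\<forall>x. (g has_derivative g' x) (at x)" "\<forall>v. sm (\<lambda>x. g' x v)" by blast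
  show ?case
    by (rule exI[of _ "\<lambda>x h. f x * g' x h + f' x h * g x"])
      (use f g in \<open>auto intro!: has_derivative_mult sm.sm_add sm.sm_mult sm_mult.hyps\<close>)
next
  case (sm_inv f)
  then obtain f' where f: "\<forall>x. (f has_derivative f' x) (at x)" "\<forall>v. sm (\<lambda>x. f' x v)" by blast
  have d: "((\<lambda>x. inverse (f x)) has_derivative (\<lambda>h. f' x h * (- (inverse (f x) ^ Suc (Suc 0))))) (at x)" for x
    apply (rule DERIV_compose_FDERIV[where f=inverse])
     apply (rule DERIV_inverse)
    using sm_inv.hyps(2)[rule_format, of x] f by (auto simp: less_imp_neq[symmetric])
  have s: "sm (\<lambda>x. f' x v * (- (inverse (f x) ^ Suc (Suc 0))))" for v
    apply (rule sm_cong[of "\<lambda>x. f' x v * ((\<lambda>x. -1) x * (inverse (f x) * inverse (f x)))"])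
     apply (intro sm.sm_mult sm.sm_const sm.sm_inv sm_inv.hyps f(2)[rule_format])
    by (simp add: power2_eq_square)
  show ?case by (rule exI[of _ "\<lambda>x h. f' x h * (- (inverse (f x) ^ Suc (Suc 0)))"]) (use d s in auto)
next
  case (sm_isq f)
  then obtain f' where f: "\<forall>x. (f has_derivative f' x) (at x)" "\<forall>v. sm (\<lambda>x. f' x v)" by blast
  have d: "((\<lambda>x. inverse (sqrt (f x))) has_derivative
     (\<lambda>h. f' x h * (- ((inverse (sqrt (f x)) / 2) * inverse (sqrt (f x) ^ Suc (Suc 0)))))) (at x)" for x
    apply (rule DERIV_compose_FDERIV[where f="\<lambda>t. inverse (sqrt t)"])
     apply (rule DERIV_inverse_fun)
      apply (rule DERIV_real_sqrt)
    using sm_isq.hyps(2)[rule_format, of x] f by (auto simp: less_imp_neq[symmetric])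
  have s: "sm (\<lambda>x. f' x v * (- ((inverse (sqrt (f x)) / 2) * inverse (sqrt (f x) ^ Suc (Suc 0)))))" for v
    apply (rule sm_cong[of "\<lambda>x. f' x v * ((\<lambda>x. -1/2) x * (inverse (sqrt (f x)) * inverse (f x)))"])
     apply (rule sm.sm_mult[OF f(2)[rule_format] sm.sm_mult[OF sm.sm_const sm.sm_mult[OF sm.sm_isq[OF sm_isq.hyps] sm.sm_inv[OF sm_isq.hyps]]]])
    using sm_isq.hyps(2) by (simp add: less_imp_le)
  show ?case by (rule exI[of _ "\<lambda>x h. f' x h * (- ((inverse (sqrt (f x)) / 2) * inverse (sqrt (f x) ^ Suc (Suc 0))))"]) (use d s in auto)
qed

lemma sm_Ck: "sm f \<Longrightarrow> Ck k f"
proof (induction k arbitrary: f)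
  case 0
  then obtain f' where f: "\<forall>x. (f has_derivative f' x) (at x)" using sm_deriv by blast
  show ?case
    using f by (auto intro!: continuous_at_imp_continuous_on has_derivative_continuous)
next
  case (Suc k)
  then obtain f' where f: "\<forall>x. (f has_derivative f' x) (at x)" "\<forall>v. sm (\<lambda>x. f' x v)"
    using sm_deriv by blast
  have fd: "frechet_derivative f (at x) = f' x" for x using f frechet_derivative_at by metis
  show ?case
    using f Suc.IH by (auto simp: fd differentiable_on_def differentiable_def)
qed

lemma sm_sum: "finite A \<Longrightarrow> (\<And>j. j \<in> A \<Longrightarrow> sm (f j)) \<Longrightarrow> sm (\<lambda>x. \<Sum>j\<in>A. f j x)"
  by (induction A rule: finite_induct) (auto intro: sm.intros)

definition smv :: "('a::euclidean_space \<Rightarrow> real^'m) \<Rightarrow> bool" where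
  "smv V \<longleftrightarrow> (\<forall>i. sm (\<lambda>x. V x $ i))"

lemma smv_deriv:
  fixes V :: "'a::euclidean_space \<Rightarrow> real^'m"
  assumes "smv V"
  shows "\<exists>V'. (\<forall>x. (V has_derivative V' x) (at x)) \<and> (\<forall>v. smv (\<lambda>x. V' x v))"
proof -
  have "\<forall>i. \<exists>f'. (\<forall>x. ((\<lambda>x. V x $ i) has_derivative f' x) (at x)) \<and> (\<forall>v. sm (\<lambda>x. f' x v))"
    using assms sm_deriv unfolding smv_def by blast
  then have "\<exists>f'. \<forall>i. (\<forall>x. ((\<lambda>x. V x $ i) has_derivative f' i x) (at x)) \<and> (\<forall>v. sm (\<lambda>x. f' i x v))"
    by (rule choice)
  then obtain f' where f0: "\<forall>i. (\<forall>x. ((\<lambda>x. V x $ i) has_derivative f' i x) (at x)) \<and> (\<forall>v. sm (\<lambda>x. f' i x v))"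
    by blast
  have f: "\<And>i x. ((\<lambda>x. V x $ i) has_derivative f' i x) (at x)" "\<And>i v. sm (\<lambda>x. f' i x v)"
    using f0 by simp_all
  define V' where "V' x h = (\<chi> i. f' i x h)" for x h
  have "(V has_derivative V' x) (at x)" for x
  proof (rule has_derivative_componentwise_within[THEN iffD2], rule ballI)
    fix b :: "real^'m" assume "b \<in> Basis"
    then obtain j where b: "b = axis j 1" by (auto simp: Basis_vec_def)
    have e1: "(\<lambda>x. V x \<bullet> b) = (\<lambda>x. V x $ j)" unfolding b by (simp add: inner_axis)
    have e2: "(\<lambda>h. V' x h \<bullet> b) = f' j x" unfolding b by (simp add: inner_axis V'_def fun_eq_iff)
    show "((\<lambda>x. V x \<bullet> b) has_derivative (\<lambda>h. V' x h \<bullet> b)) (at x)"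
      unfolding e1 e2 by (rule f(1))
  qed
  moreover have "smv (\<lambda>x. V' x v)" for v using f by (simp add: smv_def V'_def)
  ultimately show ?thesis by blast
qed

lemma smv_Ck: "smv V \<Longrightarrow> Ck k V"
proof (induction k arbitrary: V)
  case 0
  then obtain f' where f: "\<forall>x. (V has_derivative f' x) (at x)" using smv_deriv by blast
  show ?case
    using f by (auto intro!: continuous_at_imp_continuous_on has_derivative_continuous)
next
  case (Suc k)
  then obtain f' where f: "\<forall>x. (V has_derivative f' x) (at x)" "\<forall>v. smv (\<lambda>x. f' x v)"
    using smv_deriv by blast
  have fd: "frechet_derivative V (at x) = f' x" for x using f frechet_derivative_at by metis
  show ?case
    using f Suc.IH by (auto simp: fd differentiable_on_def differentiable_def)
qed

definition Tm :: "nat \<Rightarrow> ('v \<Rightarrow> real) \<Rightarrow> ('v \<Rightarrow> 'v \<Rightarrow> real) \<Rightarrow> (nat \<Rightarrow> 'v) \<Rightarrow> real" where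
  "Tm k a w v = a (v 0) * (\<Prod>j<k. w (v (2*j+1)) (v (2*j+2)))"

lemma wedge_Tm: "wedge_alpha_omega_pow k a w v =
   (1 / 2 ^ k) * (\<Sum>\<sigma> | \<sigma> permutes {0..<2*k+1}. of_int (sign \<sigma>) * Tm k a w (v \<circ> \<sigma>))"
  unfolding wedge_alpha_omega_pow_def Tm_def by (simp add: mult.assoc)

lemma lin_mult_const: "linear (f::'v::real_vector \<Rightarrow> real) \<Longrightarrow> linear (\<lambda>x. f x * c)"
  by (rule linearI) (auto simp: linear_add linear_scale algebra_simps)

lemma lin_const_mult: "linear (f::'v::real_vector \<Rightarrow> real) \<Longrightarrow> linear (\<lambda>x. c * f x)"
  by (rule linearI) (auto simp: linear_add linear_scale algebra_simps)

lemma Tm_slot_linear: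
  fixes a :: "'v::real_vector \<Rightarrow> real"
  assumes a: "linear a" and w: "bilinear w" and i: "i < 2*k+1"
  shows "linear (\<lambda>x. Tm k a w (u(i:=x)))"
proof (cases "i = 0")
  case True
  have "Tm k a w (u(i:=x)) = a x * (\<Prod>j<k. w (u (2*j+1)) (u (2*j+2)))" for x
    unfolding Tm_def using True by simp
  then show ?thesis using lin_mult_const[OF a] by simp
next
  case False
  define j where "j = (i - 1) div 2"
  have jk: "j < k" using False i unfolding j_def by arith
  have ij: "i = 2*j+1 \<or> i = 2*j+2" using False unfolding j_def by arith
  have other: "(\<Prod>j'\<in>{..<k}-{j}. w ((u(i:=x)) (2*j'+1)) ((u(i:=x)) (2*j'+2))) =
      (\<Prod>j'\<in>{..<k}-{j}. w (u (2*j'+1)) (u (2*j'+2)))" for x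
    apply (rule prod.cong, simp)
    using ij by auto
  define C where "C = a (u 0) * (\<Prod>j'\<in>{..<k}-{j}. w (u (2*j'+1)) (u (2*j'+2)))"
  have eq: "Tm k a w (u(i:=x)) = C * w ((u(i:=x)) (2*j+1)) ((u(i:=x)) (2*j+2))" for x
    unfolding Tm_def C_def
    using prod.remove[of "{..<k}" j "\<lambda>j'. w ((u(i:=x)) (2*j'+1)) ((u(i:=x)) (2*j'+2))"] jk other[of x] False
    by (simp add: ac_simps)
  show ?thesis
  proof (cases "i = 2*j+1")
    case True
    have "linear (\<lambda>x. w x (u (2*j+2)))" using w unfolding bilinear_def by auto
    then show ?thesis unfolding eq using True by (simp add: lin_const_mult)
  next
    case F2: False
    then have T: "i = 2*j+2" using ij by simp
    have "linear (\<lambda>x. w (u (2*j+1)) x)" using w unfolding bilinear_def by auto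
    then show ?thesis unfolding eq using T by (simp add: lin_const_mult)
  qed
qed

lemma wedge_slot_linear:
  fixes a :: "'v::real_vector \<Rightarrow> real"
  assumes a: "linear a" and w: "bilinear w" and i: "i < 2*k+1"
  shows "linear (\<lambda>x. wedge_alpha_omega_pow k a w (u(i:=x)))"
proof -
  have "linear (\<lambda>x. of_int (sign \<sigma>) * Tm k a w (u(i:=x) \<circ> \<sigma>))" if s: "\<sigma> permutes {0..<2*k+1}" for \<sigma>
  proof -
    have eq: "u(i:=x) \<circ> \<sigma> = (u \<circ> \<sigma>)(inv \<sigma> i := x)" for x
    proof (rule ext)
      fix y
      show "(u(i:=x) \<circ> \<sigma>) y = ((u \<circ> \<sigma>)(inv \<sigma> i := x)) y"
      proof (cases "y = inv \<sigma> i")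
        case True
        then show ?thesis using permutes_inverses(1)[OF s, of i] by simp
      next
        case False
        then have "\<sigma> y \<noteq> i" using permutes_inverses(2)[OF s, of y] by auto
        then show ?thesis using False by simp
      qed
    qed
    have "inv \<sigma> i < 2*k+1"
      using permutes_in_image[OF permutes_inv[OF s], of i] i by simp
    then show ?thesis unfolding eq
      by (intro lin_const_mult Tm_slot_linear a w)
  qed
  then have "linear (\<lambda>x. \<Sum>\<sigma> | \<sigma> permutes {0..<2*k+1}. of_int (sign \<sigma>) * Tm k a w (u(i:=x) \<circ> \<sigma>))"
    by (intro linear_compose_sum) auto
  then show ?thesis unfolding wedge_Tm by (rule lin_const_mult)
qed

lemma wedge_alt:
  assumes ij: "i \<noteq> j" "i < 2*k+1" "j < 2*k+1" and eq: "u i = u j"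
  shows "wedge_alpha_omega_pow k a w u = 0"
proof -
  let ?S = "{0..<2*k+1}"
  let ?f = "\<lambda>\<sigma>. of_int (sign \<sigma>) * Tm k a w (u \<circ> \<sigma>) :: real"
  have tp: "Transposition.transpose i j permutes ?S" using ij by (simp add: permutes_swap_id)
  have ut: "u \<circ> Transposition.transpose i j = u" using eq by (auto simp: fun_eq_iff Transposition.transpose_def)
  have "sum ?f {\<sigma>. \<sigma> permutes ?S} = sum (\<lambda>\<sigma>. ?f (Transposition.transpose i j \<circ> \<sigma>)) {\<sigma>. \<sigma> permutes ?S}"
    by (rule setum_permutations_compose_left[OF tp])
  also have "\<dots> = sum (\<lambda>\<sigma>. - ?f \<sigma>) {\<sigma>. \<sigma> permutes ?S}"
  proof (rule sum.cong, simp)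
    fix \<sigma> assume "\<sigma> \<in> {\<sigma>. \<sigma> permutes ?S}"
    then have s: "\<sigma> permutes ?S" by simp
    have "sign (Transposition.transpose i j \<circ> \<sigma>) = - sign \<sigma>"
      using sign_compose[OF permutes_imp_permutation[OF _ tp] permutes_imp_permutation[OF _ s]]
        ij by (simp add: sign_swap_id)
    moreover have "u \<circ> (Transposition.transpose i j \<circ> \<sigma>) = u \<circ> \<sigma>" using ut by (simp add: comp_assoc[symmetric])
    ultimately show "?f (Transposition.transpose i j \<circ> \<sigma>) = - ?f \<sigma>" by simp
  qed
  also have "\<dots> = - sum ?f {\<sigma>. \<sigma> permutes ?S}" by (simp add: sum_negf)
  finally have "sum ?f {\<sigma>. \<sigma> permutes ?S} = 0" by simp
  then show ?thesis unfolding wedge_Tm by simp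
qed

lemma wedge_dim:
  fixes a :: "'v::euclidean_space \<Rightarrow> real"
  assumes a: "linear a" and w: "bilinear w" and W: "subspace W" and d: "dim W < 2*k+1"
    and u: "\<And>i. i < 2*k+1 \<Longrightarrow> u i \<in> W"
  shows "wedge_alpha_omega_pow k a w u = 0"
proof (cases "inj_on u {..<2*k+1}")
  case False
  then obtain i j where "i \<noteq> j" "i < 2*k+1" "j < 2*k+1" "u i = u j"
    unfolding inj_on_def by auto
  then show ?thesis by (rule wedge_alt)
next
  case True
  let ?S = "u ` {..<2*k+1}"
  have cS: "card ?S = 2*k+1" using True by (simp add: card_image)
  have "?S \<subseteq> W" using u by auto
  then have "\<not> independent ?S" using independent_card_le_dim[of ?S W] cS d by auto
  then obtain y where yS: "y \<in> ?S" and ysp: "y \<in> span (?S - {y})"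
    unfolding dependent_def by blast
  obtain i where i: "i < 2*k+1" "u i = y" using yS by auto
  obtain c where c: "y = (\<Sum>z\<in>?S - {y}. c z *\<^sub>R z)"
    using ysp span_finite[of "?S - {y}"] by auto
  have lin: "linear (\<lambda>x. wedge_alpha_omega_pow k a w (u(i:=x)))"
    by (rule wedge_slot_linear[OF a w i(1)])
  have "wedge_alpha_omega_pow k a w u = wedge_alpha_omega_pow k a w (u(i:=y))"
    using i by (simp add: fun_upd_idem)
  also have "\<dots> = (\<Sum>z\<in>?S - {y}. c z * wedge_alpha_omega_pow k a w (u(i:=z)))"
  proof -
    have "wedge_alpha_omega_pow k a w (u(i:=(\<Sum>z\<in>?S - {y}. c z *\<^sub>R z))) =
       (\<Sum>z\<in>?S - {y}. wedge_alpha_omega_pow k a w (u(i:=c z *\<^sub>R z)))"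
      using linear_sum[OF lin, of "\<lambda>z. c z *\<^sub>R z" "?S - {y}"] by (simp add: o_def)
    also have "\<dots> = (\<Sum>z\<in>?S - {y}. c z * wedge_alpha_omega_pow k a w (u(i:=z)))"
      using linear_scale[OF lin] by simp
    finally show ?thesis using c by metis
  qed
  also have "\<dots> = 0"
  proof (rule sum.neutral, rule ballI)
    fix z assume z: "z \<in> ?S - {y}"
    then obtain j where j: "j < 2*k+1" "u j = z" by auto
    have "j \<noteq> i" using z i j by auto
    then have "wedge_alpha_omega_pow k a w (u(i:=z)) = 0"
      using wedge_alt[of i j k "u(i:=z)" a w] i j by simp
    then show "c z * wedge_alpha_omega_pow k a w (u(i:=z)) = 0" by simp
  qed
  finally show ?thesis .
qed

lemma ev_cases: "even (m::nat) \<Longrightarrow> m = 0 \<or> m = 2 \<or> m \<ge> 4"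
proof -
  assume "even m"
  then obtain k where "m = 2 * k" by (auto elim!: evenE)
  then show ?thesis by (cases k; cases "k - 1") auto
qed

lemma od_cases: "odd (m::nat) \<Longrightarrow> m = 1 \<or> m = 3 \<or> m \<ge> 5"
proof -
  assume "odd m"
  then obtain k where "m = 2 * k + 1" by (auto elim!: oddE)
  then show ?thesis by (cases k; cases "k - 1") auto
qed

definition fa :: "real \<Rightarrow> real" where "fa t = t * inverse (1 + t^2)"
definition fb :: "real \<Rightarrow> real" where "fb t = inverse (1 + t^2)"
definition fc :: "real \<Rightarrow> real" where "fc t = 2 * (1 - t^2) * inverse (1 + t^2)^2"
definition fd :: "real \<Rightarrow> real" where "fd t = - 4 * t * inverse (1 + t^2)^2"

lemma pos1: "(0::real) < 1 + t^2" by (simp add: add_pos_nonneg)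

lemma winv: "inverse (1 + t^2) * (1 + t^2) = (1::real)"
  using pos1[of t] by simp

lemma scal_ids: "t * fa t + fb t = 1" "t * fb t - fa t = 0" "t * fc t + fd t + 2 * fa t = 0"
  "t * fd t - fc t + 2 * fb t = 0"
proof -
  have g1: "\<And>w::real. w * (1 + t^2) = 1 \<Longrightarrow> t * (t * w) + w = 1" by algebra
  have g3: "\<And>w::real. w * (1 + t^2) = 1 \<Longrightarrow> t * (2 * (1 - t^2) * w^2) + - 4 * t * w^2 + 2 * (t * w) = 0"
    by algebra
  have g4: "\<And>w::real. w * (1 + t^2) = 1 \<Longrightarrow> t * (- 4 * t * w^2) - 2 * (1 - t^2) * w^2 + 2 * w = 0"
    by algebra
  show "t * fa t + fb t = 1" "t * fb t - fa t = 0" "t * fc t + fd t + 2 * fa t = 0"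
  "t * fd t - fc t + 2 * fb t = 0"
    unfolding fa_def fb_def fc_def fd_def using g1[OF winv[of t]] g3[OF winv[of t]] g4[OF winv[of t]] by (simp_all add: power_inverse)
qed

lemma D_fa: "(fa has_real_derivative (fb t * fb t - fa t * fa t)) (at t)"
proof -
  define w where "w = inverse (1 + t^2)"
  have w1: "w * (1 + t^2) = 1" using winv unfolding w_def .
  have nz: "1 + t^2 \<noteq> 0" using pos1[of t] by linarith
  have nz2: "(1 + t^2)^2 \<noteq> 0" using nz by simp
  have w2: "inverse ((1 + t^2)^2) = w * w" unfolding w_def by (simp add: power2_eq_square)
  show ?thesis
    unfolding fa_def fb_def fc_def fd_def w_def[symmetric]
    apply (rule derivative_eq_intros refl | fact nz nz2)+
    apply (simp add: w_def[symmetric] w2)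
    using w1 apply (algebra)?
    done
qed

lemma D_fb: "(fb has_real_derivative (- 2 * fa t * fb t)) (at t)"
proof -
  define w where "w = inverse (1 + t^2)"
  have w1: "w * (1 + t^2) = 1" using winv unfolding w_def .
  have nz: "1 + t^2 \<noteq> 0" using pos1[of t] by linarith
  have nz2: "(1 + t^2)^2 \<noteq> 0" using nz by simp
  have w2: "inverse ((1 + t^2)^2) = w * w" unfolding w_def by (simp add: power2_eq_square)
  show ?thesis
    unfolding fa_def fb_def fc_def fd_def w_def[symmetric]
    apply (rule derivative_eq_intros refl | fact nz nz2)+
    apply (simp add: w_def[symmetric] w2)
    using w1 apply (algebra)?
    done
qed

lemma D_fc: "(fc has_real_derivative (2 * fb t * fd t - 2 * fa t * fc t)) (at t)"
proof -
  define w where "w = inverse (1 + t^2)"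
  have w1: "w * (1 + t^2) = 1" using winv unfolding w_def .
  have nz: "1 + t^2 \<noteq> 0" using pos1[of t] by linarith
  have nz2: "(1 + t^2)^2 \<noteq> 0" using nz by simp
  have w2: "inverse ((1 + t^2)^2) = w * w" unfolding w_def by (simp add: power2_eq_square)
  show ?thesis
    unfolding fa_def fb_def fc_def fd_def w_def[symmetric]
    apply (rule derivative_eq_intros refl | fact nz nz2)+
    apply (simp add: w_def[symmetric] w2)
    using w1 apply (algebra)?
    done
qed

lemma D_fd: "(fd has_real_derivative (- (2 * fa t * fd t + 2 * fb t * fc t))) (at t)"
proof -
  define w where "w = inverse (1 + t^2)"
  have w1: "w * (1 + t^2) = 1" using winv unfolding w_def .
  have nz: "1 + t^2 \<noteq> 0" using pos1[of t] by linarith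
  have nz2: "(1 + t^2)^2 \<noteq> 0" using nz by simp
  have w2: "inverse ((1 + t^2)^2) = w * w" unfolding w_def by (simp add: power2_eq_square)
  show ?thesis
    unfolding fa_def fb_def fc_def fd_def w_def[symmetric]
    apply (rule derivative_eq_intros refl | fact nz nz2)+
    apply (simp add: w_def[symmetric] w2)
    using w1 apply (algebra)?
    done
qed


locale coords =
  fixes e :: "nat \<Rightarrow> 'n::finite"
  assumes bij: "bij_betw e {..<CARD('n)} UNIV"
    and oddN: "odd CARD('n)" and ge5: "CARD('n) \<ge> 5"
begin

definition idx :: "'n \<Rightarrow> nat" where "idx i = inv_into {..<CARD('n)} e i"

lemma idx_lt[simp]: "idx i < CARD('n)"
  unfolding idx_def using bij by (metis bij_betw_def inv_into_into lessThan_iff UNIV_I)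

lemma e_idx[simp]: "e (idx i) = i"
  unfolding idx_def using bij by (simp add: bij_betw_def f_inv_into_f)

lemma idx_e[simp]: "m < CARD('n) \<Longrightarrow> idx (e m) = m"
  unfolding idx_def using bij by (simp add: bij_betw_def inv_into_f_f)

lemma e_eq_iff: "m < CARD('n) \<Longrightarrow> m' < CARD('n) \<Longrightarrow> e m = e m' \<longleftrightarrow> m = m'"
  by (metis idx_e)

lemma idx_eq_iff: "m < CARD('n) \<Longrightarrow> idx i = m \<longleftrightarrow> i = e m"
  by auto

lemma evn1: "even m \<Longrightarrow> m \<noteq> CARD('n) - 1 \<Longrightarrow> m < CARD('n) \<Longrightarrow> m + 1 < CARD('n) - 1"
proof -
  assume a: "even m" "m \<noteq> CARD('n) - 1" "m < CARD('n)"
  obtain k where k: "CARD('n) = 2*k+1" using oddN by (auto elim!: oddE)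
  obtain j where j: "m = 2*j" using a(1) by (auto elim!: evenE)
  have "j < k" using a(2,3) k j by linarith
  then show ?thesis using k j by linarith
qed

lemma odd1: "odd m \<Longrightarrow> m < CARD('n) \<Longrightarrow> m \<noteq> CARD('n) - 1"
proof
  assume a: "odd m" "m < CARD('n)" "m = CARD('n) - 1"
  obtain k where k: "CARD('n) = 2*k+1" using oddN by (auto elim!: oddE)
  have "m = 2 * k" using a k by linarith
  then show False using a(1) by simp
qed

definition sI :: 'n where "sI = e (CARD('n) - 1)"

lemma idx_sI[simp]: "idx sI = CARD('n) - 1"
  unfolding sI_def by simp

definition Pm :: "real^'n \<Rightarrow> real^'n" where
  "Pm x = (\<chi> i. if idx i = CARD('n) - 1 then 0 else x $ i)"
definition Jm :: "real^'n \<Rightarrow> real^'n" where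
  "Jm x = (\<chi> i. if idx i = CARD('n) - 1 then 0 else if even (idx i) then - (x $ e (idx i + 1))
      else x $ e (idx i - 1))"
definition Em :: "real^'n \<Rightarrow> real^'n" where
  "Em x = (\<chi> i. if idx i = 0 then x $ e 2 else if idx i = 1 then x $ e 3 else 0)"
definition es :: "real^'n" where "es = axis sI 1"

lemma Pm_comp: "Pm x $ i = (if idx i = CARD('n) - 1 then 0 else x $ i)" by (simp add: Pm_def)
lemma Jm_comp: "Jm x $ i = (if idx i = CARD('n) - 1 then 0 else if even (idx i) then - (x $ e (idx i + 1))
      else x $ e (idx i - 1))" by (simp add: Jm_def)
lemma Em_comp: "Em x $ i = (if idx i = 0 then x $ e 2 else if idx i = 1 then x $ e 3 else 0)"
  by (simp add: Em_def)

lemma lin_Pm: "linear Pm" by (rule linearI) (auto simp: vec_eq_iff Pm_comp)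
lemma lin_Jm: "linear Jm" by (rule linearI) (auto simp: vec_eq_iff Jm_comp)
lemma lin_Em: "linear Em" by (rule linearI) (auto simp: vec_eq_iff Em_comp)

lemma n_facts: "0 < CARD('n)" "1 < CARD('n)" "2 < CARD('n)" "3 < CARD('n)" "4 < CARD('n)"
  "CARD('n) - 1 \<noteq> 0" "CARD('n) - 1 \<noteq> 1" "CARD('n) - 1 \<noteq> 2" "CARD('n) - 1 \<noteq> 3"
  using ge5 by auto

lemma nN[simp]: "CARD('n) - 1 \<noteq> 0" "CARD('n) - 1 \<noteq> 1" "CARD('n) - 1 \<noteq> 2" "CARD('n) - 1 \<noteq> 3"
  "0 \<noteq> CARD('n) - 1" "1 \<noteq> CARD('n) - 1" "2 \<noteq> CARD('n) - 1" "3 \<noteq> CARD('n) - 1"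
  "CARD('n) - Suc 0 \<noteq> 0" "CARD('n) - Suc 0 \<noteq> 1" "CARD('n) - Suc 0 \<noteq> 2" "CARD('n) - Suc 0 \<noteq> 3"
  "0 \<noteq> CARD('n) - Suc 0" "1 \<noteq> CARD('n) - Suc 0" "2 \<noteq> CARD('n) - Suc 0" "3 \<noteq> CARD('n) - Suc 0"
  "Suc 0 \<noteq> CARD('n) - Suc 0" "CARD('n) - Suc 0 \<noteq> Suc 0"
  "\<not> CARD('n) \<le> Suc 0" "\<not> CARD('n) \<le> 1" "\<not> CARD('n) \<le> 2" "\<not> CARD('n) \<le> 3"
  "Suc 0 < CARD('n)" "1 < CARD('n)" "2 < CARD('n)" "3 < CARD('n)" "0 < CARD('n)"
  using ge5 by auto

lemma idx_small[simp]: "idx (e 0) = 0" "idx (e 1) = 1" "idx (e 2) = 2" "idx (e 3) = 3"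
  "idx (e (Suc 0)) = 1"
  using n_facts by auto

lemma PP[simp]: "Pm (Pm x) = Pm x" by (auto simp: vec_eq_iff Pm_comp)
lemma PJ[simp]: "Pm (Jm x) = Jm x" by (auto simp: vec_eq_iff Pm_comp Jm_comp)
lemma PE[simp]: "Pm (Em x) = Em x" by (auto simp: vec_eq_iff Pm_comp Em_comp)
lemma EP[simp]: "Em (Pm x) = Em x" by (auto simp: vec_eq_iff Pm_comp Em_comp)
lemma EE[simp]: "Em (Em x) = 0" by (auto simp: vec_eq_iff Em_comp)
lemma idx_cases:
  obtains "idx i = CARD('n) - 1"
  | "even (idx i)" "idx i \<noteq> CARD('n) - 1" "idx i + 1 < CARD('n) - 1" "idx (e (idx i + 1)) = idx i + 1"
  | "odd (idx i)" "idx i \<noteq> CARD('n) - 1" "idx i - 1 < CARD('n) - 1" "even (idx i - 1)"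
    "idx (e (idx i - 1)) = idx i - 1" "e (idx i - 1 + 1) = i"
proof -
  have l: "idx i < CARD('n)" by simp
  consider "idx i = CARD('n) - 1" | "even (idx i)" "idx i \<noteq> CARD('n) - 1" | "odd (idx i)" by blast
  then show ?thesis
  proof cases
    case 1 then show ?thesis using that by blast
  next
    case 2
    then have "idx i + 1 < CARD('n) - 1" using evn1 l by blast
    then show ?thesis using that 2 by simp
  next
    case 3
    then have "idx i \<noteq> CARD('n) - 1" using odd1 l by blast
    moreover have "idx i - 1 < CARD('n) - 1" using l odd_pos[OF 3] by linarith
    moreover have "even (idx i - 1)" "idx i - 1 + 1 = idx i"
      using 3 by (auto simp: odd_pos)
    ultimately show ?thesis using that 3 by simp
  qed
qed

lemma JP[simp]: "Jm (Pm x) = Jm x"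
proof -
  have "Jm (Pm x) $ i = Jm x $ i" for i
    by (cases rule: idx_cases[of i]) (auto simp: Pm_comp Jm_comp)
  then show ?thesis by (simp add: vec_eq_iff)
qed
lemma JJ[simp]: "Jm (Jm x) = - Pm x"
proof -
  have "Jm (Jm x) $ i = - Pm x $ i" for i
    by (cases rule: idx_cases[of i]) (auto simp: Pm_comp Jm_comp)
  then show ?thesis by (simp add: vec_eq_iff)
qed
lemma Em_small: "Em x $ e 0 = x $ e 2" "Em x $ e 1 = x $ e 3" "Em x $ e 2 = 0" "Em x $ e 3 = 0"
  by (simp_all add: Em_comp)
lemma Jm_small: "Jm x $ e 0 = - x $ e 1" "Jm x $ e 1 = x $ e 0" "Jm x $ e 2 = - x $ e 3" "Jm x $ e 3 = x $ e 2"
  by (simp_all add: Jm_comp)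
lemma Em_big: "idx i \<noteq> 0 \<Longrightarrow> idx i \<noteq> 1 \<Longrightarrow> Em x $ i = 0"
  by (simp add: Em_comp)
lemma Jm_even: "even (idx i) \<Longrightarrow> idx i \<noteq> CARD('n) - 1 \<Longrightarrow> Jm x $ i = - x $ e (idx i + 1)"
  by (simp add: Jm_comp)
lemma Jm_odd: "odd (idx i) \<Longrightarrow> idx i \<noteq> CARD('n) - 1 \<Longrightarrow> Jm x $ i = x $ e (idx i - 1)"
  by (simp add: Jm_comp)
lemma Jm_last: "idx i = CARD('n) - 1 \<Longrightarrow> Jm x $ i = 0"
  by (simp add: Jm_comp)

lemma EJ_comp: "Em (Jm x) $ i = Jm (Em x) $ i"
proof (cases rule: idx_cases[of i])
  case 1
  have "Em (Jm x) $ i = 0" by (rule Em_big) (use 1 in simp_all)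
  moreover have "Jm (Em x) $ i = 0" by (rule Jm_last[OF 1])
  ultimately show ?thesis by simp
next
  case c2: 2
  have "idx i = 0 \<or> idx i = 2 \<or> idx i \<ge> 4" using c2(1) ev_cases by blast
  then show ?thesis
  proof (elim disjE)
    assume "idx i = 0"
    then have "i = e 0" by (metis e_idx)
    then show ?thesis by (simp only: Em_small Jm_small)
  next
    assume "idx i = 2"
    then have "i = e 2" by (metis e_idx)
    then show ?thesis by (simp add: Em_small Jm_small)
  next
    assume a: "idx i \<ge> 4"
    have "Em (Jm x) $ i = 0" using a by (intro Em_big) linarith+
    moreover have "Jm (Em x) $ i = - Em x $ e (idx i + 1)" by (rule Jm_even[OF c2(1,2)])
    moreover have "Em x $ e (idx i + 1) = 0" by (rule Em_big) (use a c2(4) in simp_all)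
    ultimately show ?thesis by simp
  qed
next
  case c3: 3
  have "idx i = 1 \<or> idx i = 3 \<or> idx i \<ge> 5" using c3(1) od_cases by blast
  then show ?thesis
  proof (elim disjE)
    assume "idx i = 1"
    then have "i = e 1" by (metis e_idx)
    then show ?thesis by (simp only: Em_small Jm_small)
  next
    assume "idx i = 3"
    then have "i = e 3" by (metis e_idx)
    then show ?thesis by (simp only: Em_small Jm_small)
  next
    assume a: "idx i \<ge> 5"
    have "Em (Jm x) $ i = 0" using a by (intro Em_big) linarith+
    moreover have "Jm (Em x) $ i = Em x $ e (idx i - 1)" by (rule Jm_odd[OF c3(1,2)])
    moreover have "Em x $ e (idx i - 1) = 0" by (rule Em_big) (use a c3(5) in simp_all)
    ultimately show ?thesis by simp
  qed
qed

lemma EJ[simp]: "Em (Jm x) = Jm (Em x)"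
  using EJ_comp by (simp add: vec_eq_iff)


lemmas P_lin = linear_add[OF lin_Pm] linear_diff[OF lin_Pm] linear_scale[OF lin_Pm] linear_neg[OF lin_Pm] linear_0[OF lin_Pm]
lemmas J_lin = linear_add[OF lin_Jm] linear_diff[OF lin_Jm] linear_scale[OF lin_Jm] linear_neg[OF lin_Jm] linear_0[OF lin_Jm]
lemmas E_lin = linear_add[OF lin_Em] linear_diff[OF lin_Em] linear_scale[OF lin_Em] linear_neg[OF lin_Em] linear_0[OF lin_Em]
lemmas PJE_lin[simp] = P_lin J_lin E_lin

definition sc :: "real^'n \<Rightarrow> real" where "sc x = x $ sI"

lemma es_comp: "es $ i = (if idx i = CARD('n) - 1 then 1 else 0)"
  unfolding es_def axis_def sI_def by (auto simp: idx_eq_iff)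

lemma sc_simps[simp]: "sc (Pm x) = 0" "sc (Jm x) = 0" "sc (Em x) = 0" "sc es = 1"
  "sc (x + y) = sc x + sc y" "sc (x - y) = sc x - sc y" "sc (c *\<^sub>R x) = c * sc x" "sc (- x) = - sc x"
  "sc 0 = 0"
  by (simp_all add: sc_def Pm_comp Jm_comp Em_comp es_comp)

lemma Pes[simp]: "Pm es = 0"
  by (simp add: vec_eq_iff Pm_comp es_comp)

lemma Ees[simp]: "Em es = 0"
  by (simp add: vec_eq_iff Em_comp es_comp)

lemma Jes[simp]: "Jm es = 0"
proof -
  have "Jm es $ i = 0" for i
  proof (cases rule: idx_cases[of i])
    case 1 then show ?thesis by (rule Jm_last)
  next
    case 2 then show ?thesis by (simp add: Jm_even es_comp)
  next
    case 3
    have "idx i - 1 \<noteq> CARD('n) - 1" using 3 by linarith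
    then show ?thesis using 3 by (simp add: Jm_odd es_comp)
  qed
  then show ?thesis by (simp add: vec_eq_iff)
qed

lemma decomp: "x = Pm x + sc x *\<^sub>R es"
  by (simp add: vec_eq_iff Pm_comp es_comp sc_def sI_def idx_eq_iff)

definition Mm :: "real \<Rightarrow> real^'n \<Rightarrow> real^'n" where
  "Mm t y = fa t *\<^sub>R Pm y + fb t *\<^sub>R Jm y + fc t *\<^sub>R Em y + fd t *\<^sub>R Jm (Em y)"

lemma MM: "Mm t (Mm t y) = (fa t * fa t - fb t * fb t) *\<^sub>R Pm y + (fa t * fb t + fb t * fa t) *\<^sub>R Jm y
   + (fa t * fc t + fc t * fa t - fb t * fd t - fd t * fb t) *\<^sub>R Em y
   + (fa t * fd t + fd t * fa t + fb t * fc t + fc t * fb t) *\<^sub>R Jm (Em y)"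
  apply (subst vec_eq_iff, rule allI)
  apply (simp add: Mm_def)
  apply (algebra)?
  done

lemma Mes[simp]: "Mm t es = 0" by (simp add: Mm_def)
lemma M0[simp]: "Mm t 0 = 0" by (simp add: Mm_def)
lemma sc_M[simp]: "sc (Mm t y) = 0" by (simp add: Mm_def)
lemma PM[simp]: "Pm (Mm t y) = Mm t y" by (simp add: Mm_def)

lemma M_lin: "Mm t (x + y) = Mm t x + Mm t y" "Mm t (x - y) = Mm t x - Mm t y" "Mm t (c *\<^sub>R x) = c *\<^sub>R Mm t x"
  by (simp_all add: Mm_def algebra_simps)

definition Km :: "real \<Rightarrow> real^'n \<Rightarrow> real^'n" where
  "Km t y = t *\<^sub>R Pm y - Jm y + (Em y + Em y)"

lemma KM0: "Km t (Mm t y) = (t * fa t + fb t) *\<^sub>R Pm y + (t * fb t - fa t) *\<^sub>R Jm y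
   + (t * fc t + fd t + (fa t + fa t)) *\<^sub>R Em y + (t * fd t - fc t + (fb t + fb t)) *\<^sub>R Jm (Em y)"
  apply (subst vec_eq_iff, rule allI)
  apply (simp add: Km_def Mm_def)
  apply (algebra)?
  done

lemma KM: "Km t (Mm t y) = Pm y"
proof -
  have "t * fc t + fd t + (fa t + fa t) = 0" "t * fd t - fc t + (fb t + fb t) = 0"
    using scal_ids(3,4)[of t] by simp_all
  then show ?thesis unfolding KM0 by (simp add: scal_ids)
qed

lemma M_inj: "Mm t y = 0 \<Longrightarrow> Pm y = 0"
  using KM[of t y] by (simp add: Km_def)

end

context coords
begin

definition Gm :: "real^'n \<Rightarrow> real^'n" where "Gm x = Mm (sc x) x"
definition Fm :: "real^'n \<Rightarrow> real^'n" where "Fm x = Gm x + es"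
definition qf :: "real^'n \<Rightarrow> real" where "qf x = Fm x \<bullet> Fm x"
definition rf :: "real^'n \<Rightarrow> real" where "rf x = inverse (sqrt (qf x))"
definition Vf :: "real^'n \<Rightarrow> real^'n" where "Vf x = rf x *\<^sub>R Fm x"

lemma sc_F[simp]: "sc (Fm x) = 1" by (simp add: Fm_def Gm_def)
lemma PG[simp]: "Pm (Gm x) = Gm x" by (simp add: Gm_def)

lemma es_inner: "es \<bullet> y = sc y" "y \<bullet> es = sc y"
  by (simp_all add: es_def inner_axis inner_axis' sc_def)

lemma F_nz: "Fm x \<noteq> 0"
proof
  assume "Fm x = 0"
  then have "sc (Fm x) = 0" by simp
  then show False by simp
qed

lemma q_pos: "0 < qf x" unfolding qf_def using F_nz by simp
lemma r_pos: "0 < rf x" unfolding rf_def using q_pos by simp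

lemma lin_sc: "linear sc" by (rule linearI) simp_all
lemma bl_sc: "bounded_linear sc" using lin_sc linear_conv_bounded_linear by blast
lemma bl_P: "bounded_linear Pm" using lin_Pm linear_conv_bounded_linear by blast
lemma bl_J: "bounded_linear Jm" using lin_Jm linear_conv_bounded_linear by blast
lemma bl_E: "bounded_linear Em" using lin_Em linear_conv_bounded_linear by blast
lemma bl_JE: "bounded_linear (\<lambda>x. Jm (Em x))"
  using linear_compose[OF lin_Em lin_Jm] linear_conv_bounded_linear by (auto simp: o_def)

lemma G_eq: "Gm = (\<lambda>x. fa (sc x) *\<^sub>R Pm x + fb (sc x) *\<^sub>R Jm x + fc (sc x) *\<^sub>R Em x + fd (sc x) *\<^sub>R Jm (Em x))"
  by (simp add: fun_eq_iff Gm_def Mm_def)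

lemma comp_deriv:
  assumes "\<And>t. (f has_real_derivative f' t) (at t)" "bounded_linear L"
  shows "((\<lambda>x. f (sc x) *\<^sub>R L x) has_derivative (\<lambda>h. f (sc x) *\<^sub>R L h + (sc h * f' (sc x)) *\<^sub>R L x)) (at x)"
  by (rule has_derivative_scaleR[OF DERIV_compose_FDERIV[OF assms(1) bounded_linear_imp_has_derivative[OF bl_sc]]
        bounded_linear_imp_has_derivative[OF assms(2)]])

lemma G_deriv: "(Gm has_derivative (\<lambda>h. Mm (sc x) (h - sc h *\<^sub>R Fm x))) (at x)"
proof -
  let ?t = "sc x"
  have raw: "(Gm has_derivative (\<lambda>h.
     (fa ?t *\<^sub>R Pm h + (sc h * (fb ?t * fb ?t - fa ?t * fa ?t)) *\<^sub>R Pm x) +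
     (fb ?t *\<^sub>R Jm h + (sc h * (- 2 * fa ?t * fb ?t)) *\<^sub>R Jm x) +
     (fc ?t *\<^sub>R Em h + (sc h * (2 * fb ?t * fd ?t - 2 * fa ?t * fc ?t)) *\<^sub>R Em x) +
     (fd ?t *\<^sub>R Jm (Em h) + (sc h * (- (2 * fa ?t * fd ?t + 2 * fb ?t * fc ?t))) *\<^sub>R Jm (Em x)))) (at x)"
    unfolding G_eq
    by (intro has_derivative_add comp_deriv[where f=fa] comp_deriv[where f=fb] comp_deriv[where f=fc]
        comp_deriv[where f=fd] D_fa D_fb D_fc D_fd bl_P bl_J bl_E bl_JE)
  have eq: "Mm ?t (h - sc h *\<^sub>R Fm x) = Mm ?t h - sc h *\<^sub>R Mm ?t (Mm ?t x)" for h
    by (simp add: Fm_def Gm_def M_lin)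
  show ?thesis
    apply (rule has_derivative_eq_rhs[OF raw])
    apply (rule ext)
    apply (simp only: eq MM)
    apply (subst vec_eq_iff, rule allI)
    apply (simp add: Mm_def)
    apply (algebra)?
    done
qed

lemma F_deriv: "(Fm has_derivative (\<lambda>h. Mm (sc x) (h - sc h *\<^sub>R Fm x))) (at x)"
proof -
  have "((\<lambda>x. Gm x + es) has_derivative (\<lambda>h. Mm (sc x) (h - sc h *\<^sub>R Fm x))) (at x)"
    by (rule has_derivative_add_const[OF G_deriv])
  then show ?thesis by (simp add: Fm_def[abs_def])
qed

definition DF :: "real^'n \<Rightarrow> real^'n \<Rightarrow> real^'n" where "DF x h = Mm (sc x) (h - sc h *\<^sub>R Fm x)"
definition Dr :: "real^'n \<Rightarrow> real" where
  "Dr x = - ((inverse (sqrt (qf x)) / 2) * inverse (sqrt (qf x) ^ Suc (Suc 0)))"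
definition Vd :: "real^'n \<Rightarrow> real^'n \<Rightarrow> real^'n" where
  "Vd x h = rf x *\<^sub>R DF x h + ((Fm x \<bullet> DF x h + DF x h \<bullet> Fm x) * Dr x) *\<^sub>R Fm x"

lemma V_deriv: "(Vf has_derivative Vd x) (at x)"
proof -
  have F: "(Fm has_derivative DF x) (at x)" using F_deriv unfolding DF_def[abs_def] .
  have q: "(qf has_derivative (\<lambda>h. Fm x \<bullet> DF x h + DF x h \<bullet> Fm x)) (at x)"
    unfolding qf_def[abs_def] by (rule has_derivative_inner[OF F F])
  have d: "((\<lambda>t. inverse (sqrt t)) has_real_derivative Dr x) (at (qf x))"
    unfolding Dr_def
    apply (rule DERIV_inverse_fun)
     apply (rule DERIV_real_sqrt)
    using q_pos[of x] by auto
  have r: "(rf has_derivative (\<lambda>h. (Fm x \<bullet> DF x h + DF x h \<bullet> Fm x) * Dr x)) (at x)"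
    unfolding rf_def[abs_def] by (rule DERIV_compose_FDERIV[OF d q])
  show ?thesis
    unfolding Vf_def[abs_def] Vd_def[abs_def]
    by (rule has_derivative_eq_rhs[OF has_derivative_scaleR[OF r F]]) (simp add: fun_eq_iff)
qed

lemma cov_V: "cov_deriv Vf p X = Vd p X"
  unfolding cov_deriv_def using frechet_derivative_at[OF V_deriv] by metis

lemma norm_V: "norm (Vf x) = 1"
proof -
  have "norm (Fm x) = sqrt (qf x)" by (simp add: qf_def norm_eq_sqrt_inner)
  then show ?thesis unfolding Vf_def rf_def using q_pos[of x] by simp
qed

lemma DF_V: "DF x (Vf x) = 0"
  unfolding DF_def Vf_def by simp

lemma Vd_V: "Vd x (Vf x) = 0"
  unfolding Vd_def DF_V by simp

lemma nondeg: "Vd x X = 0 \<Longrightarrow> \<exists>c. X = c *\<^sub>R Vf x"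
proof -
  assume a: "Vd x X = 0"
  have scD: "sc (DF x X) = 0" by (simp add: DF_def)
  have "sc (Vd x X) = (Fm x \<bullet> DF x X + DF x X \<bullet> Fm x) * Dr x"
    unfolding Vd_def using scD by simp
  then have z: "(Fm x \<bullet> DF x X + DF x X \<bullet> Fm x) * Dr x = 0" using a by simp
  have "rf x *\<^sub>R DF x X = 0" using a unfolding Vd_def z by simp
  then have "DF x X = 0" using r_pos[of x] by simp
  then have "Pm (X - sc X *\<^sub>R Fm x) = 0" unfolding DF_def by (rule M_inj)
  moreover have "X - sc X *\<^sub>R Fm x = Pm (X - sc X *\<^sub>R Fm x)"
  proof -
    have "X - sc X *\<^sub>R Fm x = (Pm X + sc X *\<^sub>R es) - sc X *\<^sub>R (Gm x + es)"
      using decomp[of X] unfolding Fm_def by simp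
    also have "\<dots> = Pm X - sc X *\<^sub>R Gm x" by (simp add: algebra_simps)
    also have "\<dots> = Pm (X - sc X *\<^sub>R Fm x)" by (simp add: Fm_def)
    finally show ?thesis .
  qed
  ultimately have "X = sc X *\<^sub>R Fm x" by simp
  then have "X = (sc X / rf x) *\<^sub>R Vf x" unfolding Vf_def using r_pos[of x] by simp
  then show ?thesis by blast
qed

end

context coords
begin

lemma lin_comp: "linear f \<Longrightarrow> linear (\<lambda>x. f x $ i)"
  by (rule linearI) (simp_all add: linear_add linear_scale)

lemma sm_w: "sm (\<lambda>x. inverse (1 + sc x * sc x))"
  by (rule sm_inv[OF sm_add[OF sm_const sm_mult[OF sm_lin[OF lin_sc] sm_lin[OF lin_sc]]]])
    (simp add: add_pos_nonneg)

lemma sm_fa: "sm (\<lambda>x. fa (sc x))"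
  by (rule sm_cong[OF sm_mult[OF sm_lin[OF lin_sc] sm_w]]) (simp add: fa_def power2_eq_square)
lemma sm_fb: "sm (\<lambda>x. fb (sc x))"
  by (rule sm_cong[OF sm_w]) (simp add: fb_def power2_eq_square)
lemma sm_fc: "sm (\<lambda>x. fc (sc x))"
  by (rule sm_cong[OF sm_mult[OF sm_mult[OF sm_const[of 2] sm_add[OF sm_const[of 1] sm_mult[OF sm_const[of "-1"] sm_mult[OF sm_lin[OF lin_sc] sm_lin[OF lin_sc]]]]] sm_mult[OF sm_w sm_w]]])
    (simp add: fc_def power2_eq_square)
lemma sm_fd: "sm (\<lambda>x. fd (sc x))"
  by (rule sm_cong[OF sm_mult[OF sm_mult[OF sm_const[of "-4"] sm_lin[OF lin_sc]] sm_mult[OF sm_w sm_w]]])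
    (simp add: fd_def power2_eq_square)

lemma F_comp: "Fm x $ i = fa (sc x) * Pm x $ i + fb (sc x) * Jm x $ i + fc (sc x) * Em x $ i
   + fd (sc x) * Jm (Em x) $ i + es $ i"
  by (simp add: Fm_def Gm_def Mm_def)

lemma sm_F: "sm (\<lambda>x. Fm x $ i)"
proof -
  have lJE: "linear (\<lambda>x. Jm (Em x))" using linear_compose[OF lin_Em lin_Jm] by (simp add: o_def)
  show ?thesis
    unfolding F_comp
    by (intro sm_add sm_mult sm_fa sm_fb sm_fc sm_fd sm_const sm_lin lin_comp lin_Pm lin_Jm lin_Em lJE)
qed

lemma sm_q: "sm qf"
proof -
  have "sm (\<lambda>x. \<Sum>j\<in>UNIV. Fm x $ j * Fm x $ j)"
    by (rule sm_sum) (auto intro: sm_mult sm_F)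
  then show ?thesis
    by (rule sm_cong) (simp add: qf_def inner_vec_def)
qed

lemma sm_r: "sm rf"
  unfolding rf_def[abs_def] by (rule sm_isq[OF sm_q]) (simp add: q_pos)

lemma smv_V: "smv Vf"
  unfolding smv_def Vf_def by (auto intro!: sm_mult sm_r sm_F)

lemma line_fib: "line_fibration Vf"
  unfolding line_fibration_def smooth_map_def
  using smv_Ck[OF smv_V] norm_V Vd_V cov_V by auto

lemma nondeg_fib: "nondegenerate_fibration Vf"
  unfolding nondegenerate_fibration_def cov_V using nondeg by blast

lemma at0: "sc 0 = 0" "Gm 0 = 0" "Fm 0 = es" "qf 0 = 1" "rf 0 = 1" "Vf 0 = es"
proof -
  show a: "sc 0 = 0" "Gm 0 = 0" by (simp_all add: Gm_def)
  then show b: "Fm 0 = es" by (simp add: Fm_def)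
  then show c: "qf 0 = 1" by (simp add: qf_def es_inner)
  then show "rf 0 = 1" by (simp add: rf_def)
  then show "Vf 0 = es" using b by (simp add: Vf_def)
qed

definition Lm :: "real^'n \<Rightarrow> real^'n" where "Lm h = Jm h + 2 *\<^sub>R Em h"

lemma lin_Lm: "linear Lm"
  by (rule linearI) (simp_all add: Lm_def algebra_simps)

lemma Vd0: "Vd 0 h = Lm h"
proof -
  have f0: "fa 0 = 0" "fb 0 = 1" "fc 0 = 2" "fd 0 = 0" by (simp_all add: fa_def fb_def fc_def fd_def)
  have "DF 0 h = Lm h"
    unfolding DF_def at0 Mm_def f0 Lm_def by simp
  moreover have "sc (DF 0 h) = 0" by (simp add: DF_def)
  ultimately show ?thesis unfolding Vd_def at0 es_inner by simp
qed

lemma cov0: "cov_deriv Vf 0 = Lm"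
  using cov_V Vd0 by (simp add: fun_eq_iff)

definition kk :: "real^'n" where "kk = axis (e 0) 1 - axis (e 3) 1"

lemma axis_comp: "m < CARD('n) \<Longrightarrow> axis (e m) c $ i = (if idx i = m then c else 0)"
  unfolding axis_def by (auto simp: idx_eq_iff)

lemma Jax0: "Jm (axis (e 0) 1) = axis (e 1) 1"
proof -
  have "Jm (axis (e 0) 1) $ i = axis (e 1) 1 $ i" for i
  proof (cases rule: idx_cases[of i])
    case 1 then show ?thesis by (simp add: Jm_last axis_comp)
  next
    case 2
    have "idx i \<noteq> 1" using 2(1) by auto
    then show ?thesis using 2 by (simp add: Jm_even axis_comp)
  next
    case 3
    have "idx i - 1 = 0 \<longleftrightarrow> idx i = 1" using 3(1) by (cases "idx i") auto
    then show ?thesis using 3 by (simp add: Jm_odd axis_comp)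
  qed
  then show ?thesis by (simp add: vec_eq_iff)
qed

lemma Jax3: "Jm (axis (e 3) 1) = - axis (e 2) 1"
proof -
  have "Jm (axis (e 3) 1) $ i = - axis (e 2) 1 $ i" for i
  proof (cases rule: idx_cases[of i])
    case 1 then show ?thesis by (simp add: Jm_last axis_comp)
  next
    case 2
    have "idx i + 1 = 3 \<longleftrightarrow> idx i = 2" by auto
    then show ?thesis using 2 by (simp add: Jm_even axis_comp)
  next
    case 3
    have "idx i - 1 \<noteq> 3" using 3(1) by (cases "idx i = 4") auto
    moreover have "idx i \<noteq> 2" using 3(1) by auto
    ultimately show ?thesis using 3 by (simp add: Jm_odd axis_comp)
  qed
  then show ?thesis by (simp add: vec_eq_iff)
qed

lemma Eax0: "Em (axis (e 0) 1) = 0"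
  by (simp add: vec_eq_iff Em_comp axis_comp)

lemma Eax3: "Em (axis (e 3) 1) = axis (e 1) 1"
  by (simp add: vec_eq_iff Em_comp axis_comp)

lemma Lkk: "Lm kk = axis (e 1) 1 + axis (e 2) 1 - 2 *\<^sub>R axis (e 1) 1"
  unfolding Lm_def kk_def by (simp add: Jax0 Jax3 Eax0 Eax3)

lemma Lsym: "Lm z \<bullet> kk = Lm kk \<bullet> z"
proof -
  have "Lm z \<bullet> kk = Lm z $ e 0 - Lm z $ e 3"
    unfolding kk_def by (simp add: inner_diff_right inner_axis)
  also have "\<dots> = z $ e 2 - z $ e 1"
    by (simp add: Lm_def Jm_small Em_small)
  also have "\<dots> = Lm kk \<bullet> z"
    unfolding Lkk by (simp add: inner_diff_left inner_add_left inner_axis')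
  finally show ?thesis .
qed

lemma kk_nz: "kk \<noteq> 0"
proof
  assume "kk = 0"
  then have "kk $ e 0 = 0" by simp
  moreover have "kk $ e 0 = 1" by (simp add: kk_def axis_comp)
  ultimately show False by simp
qed

lemma sc_kk: "sc kk = 0"
  by (simp add: kk_def sc_def axis_comp)

definition pr :: "real^'n \<Rightarrow> real^'n" where "pr x = x - ((kk \<bullet> x) / (kk \<bullet> kk)) *\<^sub>R kk"

lemma pr_in: "kk \<bullet> pr x = 0"
  using kk_nz by (simp add: pr_def inner_diff_right)

lemma om_inv: "Lm (x - c *\<^sub>R kk) \<bullet> (y - d *\<^sub>R kk) - Lm (y - d *\<^sub>R kk) \<bullet> (x - c *\<^sub>R kk) =
   Lm x \<bullet> y - Lm y \<bullet> x"
  using Lsym[of x] Lsym[of y]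
  by (simp add: linear_diff[OF lin_Lm] linear_scale[OF lin_Lm] inner_diff_left inner_diff_right
      algebra_simps)

lemma noncontact: "\<not> orth_contact Vf"
proof -
  define k where "k = (CARD('n) - 1) div 2"
  have k2: "2 * k + 1 = CARD('n)"
  proof -
    obtain m where m: "CARD('n) = 2 * m + 1" using oddN by (auto elim!: oddE)
    then show ?thesis unfolding k_def by simp
  qed
  let ?a = "dual_form Vf 0" and ?w = "d_dual_form Vf 0"
  have a_eq: "?a x = sc x" for x by (simp add: dual_form_def at0 es_inner)
  have w_eq: "?w x y = Lm x \<bullet> y - Lm y \<bullet> x" for x y by (simp add: d_dual_form_def cov0)
  have a_pr: "?a (pr x) = ?a x" for x by (simp add: a_eq pr_def sc_kk)
  have w_pr: "?w (pr x) (pr y) = ?w x y" for x y unfolding w_eq pr_def by (rule om_inv)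
  have lin_a: "linear ?a" by (rule linearI) (simp_all add: a_eq)
  have bil_w: "bilinear ?w"
    unfolding bilinear_def w_eq
    by (auto intro!: linearI simp: linear_add[OF lin_Lm] linear_scale[OF lin_Lm] inner_add_left
        inner_add_right algebra_simps)
  have "wedge_alpha_omega_pow k ?a ?w v = 0" for v
  proof -
    have "wedge_alpha_omega_pow k ?a ?w v = wedge_alpha_omega_pow k ?a ?w (pr \<circ> v)"
      unfolding wedge_alpha_omega_pow_def by (simp add: a_pr w_pr)
    also have "\<dots> = 0"
    proof (rule wedge_dim[OF lin_a bil_w subspace_hyperplane[of kk]])
      show "dim {x. kk \<bullet> x = 0} < 2 * k + 1" using dim_hyperplane[OF kk_nz] k2 by simp
      show "\<And>i. i < 2 * k + 1 \<Longrightarrow> (pr \<circ> v) i \<in> {x. kk \<bullet> x = 0}" by (simp add: pr_in)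
    qed
    finally show ?thesis .
  qed
  then show ?thesis unfolding orth_contact_def k_def by blast
qed

end

theorem theorem1p6:
  assumes "odd CARD('n)" and "CARD('n) \<ge> 5"
  shows "\<exists>V :: real^'n \<Rightarrow> real^'n.
           line_fibration V \<and> nondegenerate_fibration V \<and> \<not> orth_contact V"
proof -
  obtain e :: "nat \<Rightarrow> 'n" where "bij_betw e {0..<card (UNIV :: 'n set)} UNIV"
    using ex_bij_betw_nat_finite[of "UNIV :: 'n set"] by auto
  then have b: "bij_betw e {..<CARD('n)} UNIV" by (simp add: atLeast0LessThan)
  interpret coords e using b assms by unfold_locales
  show ?thesis using line_fib nondeg_fib noncontact by blast
qed

end
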